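(* Fix an integer $a\ge 2$ and an integer $k\ge 2$. Let $n\to\infty$ and let $m=m(n)=o\!\left(n^{1+1/k}\right)$. Then all hypergraphs $H\in\mathcal{H}(a,n,m)$, except for $o\!\left(\binom{\binom{n}{a}}{m}\right)$ of them, contain at most $n$ Berge-cycles of length at most $k$.
   Context: $\mathcal{H}(a,n,m)$ is the family of all $a$-uniform hypergraphs on vertex set $[n]$ with exactly $m$ hyperedges; $|\mathcal{H}(a,n,m)|=\binom{\binom{n}{a}}{m}$. A Berge-cycle of length $l\ge 2$ consists of $l$ distinct hyperedges $e_1,\dots,e_l$ and $l$ distinct vertices $v_1,\dots,v_l$ with $v_i\in e_i\cap e_{i+1}$ for $i=1,\dots,l$ (indices modulo $l$). *)

theory Defs
  imports Complex_Main
begin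

definition hyp_family :: "nat \<Rightarrow> nat \<Rightarrow> nat \<Rightarrow> nat set set set" where
  "hyp_family a n m = {H. H \<subseteq> {e. e \<subseteq> {1..n} \<and> card e = a} \<and> card H = m}"

text \<open>A Berge-cycle of length l, given by distinct hyperedges e_0..e_(l-1) and distinct
  vertices v_0..v_(l-1) with v_i in e_i and e_(i+1 mod l), is identified with its
  set of incidences (a cycle of length 2l in the vertex-edge incidence graph); this
  identifies the 2l rotations/reflections of the same cycle.\<close>
definition berge_cycles :: "'v set set \<Rightarrow> nat \<Rightarrow> ('v \<times> 'v set) set set" where
  "berge_cycles H l =
     {(\<Union>i<l. {(v i, e i), (v i, e (Suc i mod l))}) | e v.
        inj_on e {..<l} \<and> inj_on v {..<l} \<and> e ` {..<l} \<subseteq> H \<and>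
        (\<forall>i<l. v i \<in> e i \<and> v i \<in> e (Suc i mod l))}"

definition berge_cycles_upto :: "'v set set \<Rightarrow> nat \<Rightarrow> ('v \<times> 'v set) set set" where
  "berge_cycles_upto H k = (\<Union>l\<in>{2..k}. berge_cycles H l)"

end

theory Submission imports Defs "HOL-Library.FuncSet" begin

lemma aux_mult:
  fixes d X Y e N P :: nat
  assumes "d * X = Y * e"
  shows "d * (X * (N * P)) = (Y * P) * (e * N)"
proof -
  have "d * (X * (N * P)) = (d * X) * (N * P)" by (simp only: mult.assoc)
  also have "\<dots> = (Y * e) * (N * P)" using assms by simp
  also have "\<dots> = (Y * P) * (e * N)" by (simp only: mult_ac)
  finally show ?thesis .
qed

lemma choose_ineq:
  fixes N m l :: nat
  shows "l \<le> m \<Longrightarrow> m \<le> N \<Longrightarrow> ((N - l) choose (m - l)) * N ^ l \<le> (N choose m) * m ^ l"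
proof (induction l)
  case 0 then show ?case by simp
next
  case (Suc l)
  have IH: "((N - l) choose (m - l)) * N ^ l \<le> (N choose m) * m ^ l" using Suc by simp
  have e1: "Suc (N - Suc l) = N - l" "Suc (m - Suc l) = m - l" using Suc.prems by auto
  have id: "(N - l) * ((N - Suc l) choose (m - Suc l)) = ((N - l) choose (m - l)) * (m - l)"
    using Suc_times_binomial_eq[of "N - Suc l" "m - Suc l"] unfolding e1 .
  have ml: "(m - l) * N \<le> m * (N - l)"
  proof -
    have lm: "l * m \<le> l * N" using Suc.prems by simp
    have "(m - l) * N = m * N - l * N" by (simp add: diff_mult_distrib)
    also have "\<dots> \<le> m * N - l * m" using lm by (rule diff_le_mono2)
    also have "\<dots> = m * (N - l)" by (simp add: diff_mult_distrib2 mult.commute)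
    finally show ?thesis .
  qed
  have "(N - l) * (((N - Suc l) choose (m - Suc l)) * N ^ Suc l)
      = (((N - l) choose (m - l)) * N ^ l) * ((m - l) * N)"
    using aux_mult[OF id, of N "N ^ l"] by (simp only: power_Suc)
  also have "\<dots> \<le> (((N - l) choose (m - l)) * N ^ l) * (m * (N - l))"
    using ml by (rule mult_le_mono2)
  also have "\<dots> \<le> ((N choose m) * m ^ l) * (m * (N - l))"
    using IH by (rule mult_le_mono1)
  also have "\<dots> = (N - l) * ((N choose m) * m ^ Suc l)" by (simp only: power_Suc mult_ac)
  finally show ?case using Suc.prems by simp
qed

lemma count_super:
  assumes fin: "finite U" and EU: "E \<subseteq> U" and cE: "card E = l"
  shows "card {H. H \<subseteq> U \<and> card H = m \<and> E \<subseteq> H} * card U ^ l \<le> (card U choose m) * m ^ l"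
proof (cases "l \<le> m \<and> m \<le> card U")
  case False
  have "{H. H \<subseteq> U \<and> card H = m \<and> E \<subseteq> H} = {}"
  proof -
    { fix H assume H: "H \<subseteq> U" "E \<subseteq> H" "card H = m"
      have "finite H" using H fin finite_subset by blast
      then have False using False card_mono[OF fin H(1)] card_mono[OF _ H(2)] cE H by auto }
    then show ?thesis by blast
  qed
  then show ?thesis by (metis card.empty mult_0 zero_le)
next
  case True
  have fE: "finite E" using fin EU finite_subset by blast
  have bij: "bij_betw (\<lambda>H. H - E) {H. H \<subseteq> U \<and> card H = m \<and> E \<subseteq> H} {B. B \<subseteq> U - E \<and> card B = m - l}"
  proof (rule bij_betw_byWitness[where f' = "\<lambda>B. B \<union> E"])
    show "\<forall>H\<in>{H. H \<subseteq> U \<and> card H = m \<and> E \<subseteq> H}. H - E \<union> E = H" by blast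
    show "\<forall>B\<in>{B. B \<subseteq> U - E \<and> card B = m - l}. B \<union> E - E = B" by blast
    show "(\<lambda>H. H - E) ` {H. H \<subseteq> U \<and> card H = m \<and> E \<subseteq> H} \<subseteq> {B. B \<subseteq> U - E \<and> card B = m - l}"
      using cE fE by (auto simp: card_Diff_subset)
    show "(\<lambda>B. B \<union> E) ` {B. B \<subseteq> U - E \<and> card B = m - l} \<subseteq> {H. H \<subseteq> U \<and> card H = m \<and> E \<subseteq> H}"
    proof clarify
      fix B assume B: "B \<subseteq> U - E" "card B = m - l"
      have "finite B" using B fin finite_subset by blast
      then have "card (B \<union> E) = card B + card E" using B fE by (subst card_Un_disjoint) auto
      then show "B \<union> E \<subseteq> U \<and> card (B \<union> E) = m \<and> E \<subseteq> B \<union> E" using B EU cE True by auto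
    qed
  qed
  have "card {H. H \<subseteq> U \<and> card H = m \<and> E \<subseteq> H} = (card U - l) choose (m - l)"
    using bij_betw_same_card[OF bij] n_subsets[of "U - E" "m - l"] fin fE EU cE
    by (simp add: card_Diff_subset)
  then show ?thesis using choose_ineq[of l m "card U"] True by simp
qed

lemma count_pair:
  assumes fin: "finite A" and uw: "u \<noteq> w"
  shows "card {S. S \<subseteq> A \<and> card S = a \<and> u \<in> S \<and> w \<in> S} \<le> card A ^ (a - 2)"
proof -
  have inj: "inj_on (\<lambda>S. S - {u, w}) {S. S \<subseteq> A \<and> card S = a \<and> u \<in> S \<and> w \<in> S}"
    by (rule inj_onI) blast
  have img: "(\<lambda>S. S - {u, w}) ` {S. S \<subseteq> A \<and> card S = a \<and> u \<in> S \<and> w \<in> S} \<subseteq> {B. B \<subseteq> A \<and> card B = a - 2}"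
  proof clarify
    fix S assume S: "S \<subseteq> A" "u \<in> S" "w \<in> S" "a = card S"
    have "finite S" using S fin finite_subset by blast
    then show "S - {u, w} \<subseteq> A \<and> card (S - {u, w}) = card S - 2" using S uw
      by (auto simp: card_Diff_subset)
  qed
  have "card {S. S \<subseteq> A \<and> card S = a \<and> u \<in> S \<and> w \<in> S} \<le> card {B. B \<subseteq> A \<and> card B = a - 2}"
    using card_inj_on_le[OF inj img] fin by simp
  also have "\<dots> = card A choose (a - 2)" using n_subsets[OF fin] .
  also have "\<dots> \<le> card A ^ (a - 2)"
    by (cases "a - 2 \<le> card A") (auto simp: binomial_le_pow binomial_eq_0)
  finally show ?thesis .
qed

lemma swap_count:
  assumes "finite A" "finite B"
  shows "(\<Sum>x\<in>A. card {y\<in>B. P x y}) = (\<Sum>y\<in>B. card {x\<in>A. P x y})"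
proof -
  have c: "\<And>S Q. finite S \<Longrightarrow> card {y\<in>S. Q y} = (\<Sum>y\<in>S. if Q y then 1 else 0::nat)"
    by (simp add: sum.If_cases Int_def)
  have "(\<Sum>x\<in>A. card {y\<in>B. P x y}) = (\<Sum>x\<in>A. \<Sum>y\<in>B. if P x y then 1 else 0::nat)"
    by (rule sum.cong[OF refl]) (rule c[OF assms(2)])
  also have "\<dots> = (\<Sum>y\<in>B. \<Sum>x\<in>A. if P x y then 1 else 0::nat)" by (rule sum.swap)
  also have "\<dots> = (\<Sum>y\<in>B. card {x\<in>A. P x y})"
    by (rule sum.cong[OF refl]) (rule c[OF assms(1), symmetric])
  finally show ?thesis .
qed

definition inc :: "nat \<Rightarrow> (nat \<Rightarrow> 'v set) \<Rightarrow> (nat \<Rightarrow> 'v) \<Rightarrow> ('v \<times> 'v set) set" where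
  "inc l e v = (\<Union>i<l. {(v i, e i), (v i, e (Suc i mod l))})"

definition BT :: "nat \<Rightarrow> nat \<Rightarrow> nat \<Rightarrow> ((nat \<Rightarrow> nat) \<times> (nat \<Rightarrow> nat set)) set" where
  "BT n a l = {(v,e). v \<in> PiE {..<l} (\<lambda>_. {1..n}) \<and> inj_on v {..<l} \<and>
     e \<in> PiE {..<l} (\<lambda>j. {S. S \<subseteq> {1..n} \<and> card S = a \<and> v j \<in> S \<and> v ((j + (l - 1)) mod l) \<in> S}) \<and>
     inj_on e {..<l}}"

lemma prev_eq: fixes l j :: nat shows "0 < l \<Longrightarrow> j < l \<Longrightarrow> Suc ((j + (l - 1)) mod l) mod l = j"
proof -
  assume "0 < l" "j < l"
  then have "Suc (j + (l - 1)) = j + l" by simp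
  then show ?thesis using \<open>j < l\<close> by (simp add: mod_Suc_eq)
qed

lemma prev_ne: fixes l j :: nat shows "2 \<le> l \<Longrightarrow> j < l \<Longrightarrow> (j + (l - 1)) mod l \<noteq> j"
proof
  assume l: "2 \<le> l" "j < l" and eq: "(j + (l - 1)) mod l = j"
  have "Suc j mod l = j" using prev_eq[of l j] l eq by simp
  then show False using l
    by (metis Suc_lessI mod_less mod_self n_not_Suc_n nat_neq_iff numeral_2_eq_2 Suc_le_lessD)
qed

lemma BT_fin: "finite (BT n a l)"
proof -
  have "BT n a l \<subseteq> PiE {..<l} (\<lambda>_. {1..n}) \<times> PiE {..<l} (\<lambda>_. Pow {1..n})"
  proof clarify
    fix v e assume "(v, e) \<in> BT n a l"
    then have 1: "v \<in> PiE {..<l} (\<lambda>_. {1..n})"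
      and 2: "e \<in> PiE {..<l} (\<lambda>j. {S. S \<subseteq> {1..n} \<and> card S = a \<and> v j \<in> S \<and> v ((j + (l - 1)) mod l) \<in> S})"
      unfolding BT_def by auto
    have "PiE {..<l} (\<lambda>j. {S. S \<subseteq> {1..n} \<and> card S = a \<and> v j \<in> S \<and> v ((j + (l - 1)) mod l) \<in> S}) \<subseteq> PiE {..<l} (\<lambda>_. Pow {1..n})"
      by (rule PiE_mono) auto
    then show "v \<in> PiE {..<l} (\<lambda>_. {1..n}) \<and> e \<in> PiE {..<l} (\<lambda>_. Pow {1..n})" using 1 2 by blast
  qed
  moreover have "finite (PiE {..<l} (\<lambda>_. {1..n}) \<times> PiE {..<l} (\<lambda>_. Pow {1..n}))"
    by (intro finite_cartesian_product finite_PiE) auto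
  ultimately show ?thesis by (rule finite_subset)
qed

lemma BT_card:
  assumes l: "2 \<le> l"
  shows "card (BT n a l) \<le> n ^ l * (n ^ (a - 2)) ^ l"
proof -
  define V where "V = {v \<in> PiE {..<l} (\<lambda>_. {1..n::nat}). inj_on v {..<l}}"
  define D where "D = (\<lambda>v j. {S. S \<subseteq> {1..n::nat} \<and> card S = a \<and> v j \<in> S \<and> v ((j + (l - 1)) mod l) \<in> S})"
  have sub: "BT n a l \<subseteq> Sigma V (\<lambda>v. PiE {..<l} (D v))"
    unfolding BT_def V_def D_def by auto
  have fV: "finite V" unfolding V_def
    by (rule finite_subset[of _ "PiE {..<l} (\<lambda>_. {1..n})"]) (auto intro: finite_PiE)
  have fD: "\<And>v. finite (PiE {..<l} (D v))" unfolding D_def by (intro finite_PiE) auto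
  have "card (BT n a l) \<le> card (Sigma V (\<lambda>v. PiE {..<l} (D v)))"
    using sub fV fD by (intro card_mono) auto
  also have "\<dots> = (\<Sum>v\<in>V. \<Prod>j<l. card (D v j))"
    using fV fD by (simp add: card_PiE)
  also have "\<dots> \<le> (\<Sum>v\<in>V. \<Prod>j<l. n ^ (a - 2))"
  proof (intro sum_mono prod_mono conjI)
    fix v j assume v: "v \<in> V" and j: "j \<in> {..<l}"
    have ne: "v j \<noteq> v ((j + (l - 1)) mod l)"
      using v j prev_ne[OF l, of j] l unfolding V_def inj_on_def by auto
    show "card (D v j) \<le> n ^ (a - 2)"
      using count_pair[of "{1..n}" "v j" "v ((j + (l - 1)) mod l)" a] ne unfolding D_def
      by (simp add: conj_commute)
  qed auto
  also have "\<dots> = card V * (n ^ (a - 2)) ^ l" by simp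
  also have "\<dots> \<le> n ^ l * (n ^ (a - 2)) ^ l"
  proof -
    have "card V \<le> card (PiE {..<l} (\<lambda>_. {1..n::nat}))"
      unfolding V_def by (intro card_mono) (auto intro: finite_PiE)
    also have "\<dots> = n ^ l" by (simp add: card_PiE)
    finally show ?thesis by simp
  qed
  finally show ?thesis .
qed

lemma bc_sub:
  assumes l: "2 \<le> l" and H: "H \<subseteq> {S. S \<subseteq> {1..n} \<and> card S = a}"
  shows "berge_cycles H l \<subseteq> (\<lambda>(v,e). inc l e v) ` {p \<in> BT n a l. snd p ` {..<l} \<subseteq> H}"
proof
  fix c assume "c \<in> berge_cycles H l"
  then obtain e v where c: "c = (\<Union>i<l. {(v i, e i), (v i, e (Suc i mod l))})"
    and ie: "inj_on e {..<l}" and iv: "inj_on v {..<l}" and eH: "e ` {..<l} \<subseteq> H"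
    and vin: "\<forall>i<l. v i \<in> e i \<and> v i \<in> e (Suc i mod l)"
    unfolding berge_cycles_def by blast
  define v' where "v' = restrict v {..<l}"
  define e' where "e' = restrict e {..<l}"
  have l0: "0 < l" using l by simp
  have "c = inc l e' v'" unfolding c inc_def v'_def e'_def using l0
    by (intro SUP_cong) auto
  moreover have "(v', e') \<in> BT n a l"
  proof -
    have ev: "\<And>j. j < l \<Longrightarrow> e j \<subseteq> {1..n} \<and> card (e j) = a" using eH H by auto
    have vn: "\<And>j. j < l \<Longrightarrow> v j \<in> {1..n}" using ev vin by blast
    have "v' \<in> PiE {..<l} (\<lambda>_. {1..n})" unfolding v'_def using vn by auto
    moreover have "inj_on v' {..<l}" "inj_on e' {..<l}" unfolding v'_def e'_def
      using iv ie by (auto simp: inj_on_def)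
    moreover have "e' \<in> PiE {..<l} (\<lambda>j. {S. S \<subseteq> {1..n} \<and> card S = a \<and> v' j \<in> S \<and> v' ((j + (l - 1)) mod l) \<in> S})"
    proof -
      { fix j assume j: "j < l"
        let ?i = "(j + (l - 1)) mod l"
        have "?i < l" using l0 by simp
        then have "v ?i \<in> e j" using vin prev_eq[OF l0 j] by metis
        then have "v' ?i \<in> e' j" using j \<open>?i < l\<close> unfolding v'_def e'_def by simp }
      then show ?thesis unfolding v'_def e'_def using ev vin by auto
    qed
    ultimately show ?thesis unfolding BT_def by simp
  qed
  moreover have "e' ` {..<l} \<subseteq> H" unfolding e'_def using eH by auto
  ultimately show "c \<in> (\<lambda>(v,e). inc l e v) ` {p \<in> BT n a l. snd p ` {..<l} \<subseteq> H}"
    by (intro image_eqI[where x = "(v', e')"]) auto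
qed

lemma bc_card:
  assumes l: "2 \<le> l" and H: "H \<subseteq> {S. S \<subseteq> {1..n} \<and> card S = a}"
  shows "card (berge_cycles H l) \<le> card {p \<in> BT n a l. snd p ` {..<l} \<subseteq> H}"
proof -
  have f: "finite {p \<in> BT n a l. snd p ` {..<l} \<subseteq> H}" using BT_fin by simp
  have "card (berge_cycles H l) \<le> card ((\<lambda>(v,e). inc l e v) ` {p \<in> BT n a l. snd p ` {..<l} \<subseteq> H})"
    using bc_sub[OF assms] f by (intro card_mono) auto
  also have "\<dots> \<le> card {p \<in> BT n a l. snd p ` {..<l} \<subseteq> H}" by (rule card_image_le[OF f])
  finally show ?thesis .
qed

lemma per_p:
  assumes p: "p \<in> BT n a l"
  shows "card {H \<in> hyp_family a n m. snd p ` {..<l} \<subseteq> H} * (n choose a) ^ l \<le> ((n choose a) choose m) * m ^ l"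
proof -
  obtain v e where pe: "p = (v, e)" by (cases p)
  define U where "U = {S. S \<subseteq> {1..n::nat} \<and> card S = a}"
  have fU: "finite U" unfolding U_def by simp
  have cU: "card U = n choose a" unfolding U_def using n_subsets[of "{1..n}" a] by simp
  have ie: "inj_on e {..<l}" and eU: "e ` {..<l} \<subseteq> U"
    using p unfolding pe BT_def U_def by (auto simp: PiE_iff)
  have cE: "card (e ` {..<l}) = l" using card_image[OF ie] by simp
  have eq: "{H \<in> hyp_family a n m. snd p ` {..<l} \<subseteq> H} = {H. H \<subseteq> U \<and> card H = m \<and> e ` {..<l} \<subseteq> H}"
    unfolding hyp_family_def U_def pe by auto
  show ?thesis using count_super[OF fU eU cE, of m] unfolding eq cU .
qed


lemma main_bound:
  assumes a2: "2 \<le> a" and k2: "2 \<le> k" and an: "a \<le> n"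
  shows "real (card {H \<in> hyp_family a n m. card (berge_cycles_upto H k) > n}) * real n
     \<le> real ((n choose a) choose m) * (\<Sum>l\<in>{2..k}. (real n ^ (a - 1) * real m / real (n choose a)) ^ l)"
proof -
  define F where "F = hyp_family a n m"
  define N where "N = n choose a"
  define C where "C = N choose m"
  define Q where "Q = (\<lambda>l H. card {p \<in> BT n a l. snd p ` {..<l} \<subseteq> H})"
  have fF: "finite F"
  proof -
    have "F \<subseteq> Pow (Pow {1..n})" unfolding F_def hyp_family_def by auto
    then show ?thesis by (rule finite_subset) simp
  qed
  have N0: "0 < N" unfolding N_def using an by simp
  define S where "S = (\<Sum>H\<in>F. card (berge_cycles_upto H k))"
  have step1: "card {H \<in> F. card (berge_cycles_upto H k) > n} * n \<le> S"
  proof -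
    have "card {H \<in> F. card (berge_cycles_upto H k) > n} * n
        = (\<Sum>H\<in>{H \<in> F. card (berge_cycles_upto H k) > n}. n)" by simp
    also have "\<dots> \<le> (\<Sum>H\<in>{H \<in> F. card (berge_cycles_upto H k) > n}. card (berge_cycles_upto H k))"
      by (intro sum_mono) auto
    also have "\<dots> \<le> S" unfolding S_def using fF by (intro sum_mono2) auto
    finally show ?thesis .
  qed
  have step2: "\<And>H. H \<in> F \<Longrightarrow> card (berge_cycles_upto H k) \<le> (\<Sum>l\<in>{2..k}. Q l H)"
  proof -
    fix H assume H: "H \<in> F"
    then have HU: "H \<subseteq> {S. S \<subseteq> {1..n} \<and> card S = a}" unfolding F_def hyp_family_def by auto
    have "card (berge_cycles_upto H k) \<le> (\<Sum>l\<in>{2..k}. card (berge_cycles H l))"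
      unfolding berge_cycles_upto_def by (rule card_UN_le) simp
    also have "\<dots> \<le> (\<Sum>l\<in>{2..k}. Q l H)" unfolding Q_def
      by (intro sum_mono bc_card HU) simp
    finally show "card (berge_cycles_upto H k) \<le> (\<Sum>l\<in>{2..k}. Q l H)" .
  qed
  have step3: "S \<le> (\<Sum>l\<in>{2..k}. \<Sum>p\<in>BT n a l. card {H \<in> F. snd p ` {..<l} \<subseteq> H})"
  proof -
    have "S \<le> (\<Sum>H\<in>F. \<Sum>l\<in>{2..k}. Q l H)" unfolding S_def by (intro sum_mono step2)
    also have "\<dots> = (\<Sum>l\<in>{2..k}. \<Sum>H\<in>F. Q l H)" by (rule sum.swap)
    also have "\<dots> = (\<Sum>l\<in>{2..k}. \<Sum>p\<in>BT n a l. card {H \<in> F. snd p ` {..<l} \<subseteq> H})"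
      unfolding Q_def by (intro sum.cong refl swap_count fF BT_fin)
    finally show ?thesis .
  qed
  have step4: "\<And>l. l \<in> {2..k} \<Longrightarrow> real (\<Sum>p\<in>BT n a l. card {H \<in> F. snd p ` {..<l} \<subseteq> H})
      \<le> real C * (real n ^ (a - 1) * real m / real N) ^ l"
  proof -
    fix l assume l: "l \<in> {2..k}"
    have pp: "\<And>p. p \<in> BT n a l \<Longrightarrow> real (card {H \<in> F. snd p ` {..<l} \<subseteq> H}) \<le> real C * real m ^ l / real N ^ l"
    proof -
      fix p assume "p \<in> BT n a l"
      from per_p[OF this, of m] have nat_ineq: "card {H \<in> F. snd p ` {..<l} \<subseteq> H} * N ^ l \<le> C * m ^ l"
        unfolding F_def C_def N_def .
      have "real (card {H \<in> F. snd p ` {..<l} \<subseteq> H} * N ^ l) \<le> real (C * m ^ l)"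
        using nat_ineq by (simp only: of_nat_le_iff)
      then have "real (card {H \<in> F. snd p ` {..<l} \<subseteq> H}) * real N ^ l \<le> real C * real m ^ l"
        by (simp only: of_nat_mult of_nat_power)
      then show "real (card {H \<in> F. snd p ` {..<l} \<subseteq> H}) \<le> real C * real m ^ l / real N ^ l"
        using N0 by (simp add: pos_le_divide_eq)
    qed
    have "real (\<Sum>p\<in>BT n a l. card {H \<in> F. snd p ` {..<l} \<subseteq> H})
        = (\<Sum>p\<in>BT n a l. real (card {H \<in> F. snd p ` {..<l} \<subseteq> H}))" by simp
    also have "\<dots> \<le> (\<Sum>p\<in>BT n a l. real C * real m ^ l / real N ^ l)" by (intro sum_mono pp)
    also have "\<dots> = real (card (BT n a l)) * (real C * real m ^ l / real N ^ l)" by simp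
    also have "\<dots> \<le> real (n ^ l * (n ^ (a - 2)) ^ l) * (real C * real m ^ l / real N ^ l)"
    proof -
      have bt0: "card (BT n a l) \<le> n ^ l * (n ^ (a - 2)) ^ l" using BT_card[of l n a] l by simp
      have bt: "real (card (BT n a l)) \<le> real (n ^ l * (n ^ (a - 2)) ^ l)" using bt0 by (simp only: of_nat_le_iff)
      show ?thesis by (rule mult_right_mono[OF bt]) simp
    qed
    also have "\<dots> = real C * (real n ^ (a - 1) * real m / real N) ^ l"
    proof -
      obtain b where ab: "a = Suc (Suc b)" using a2 by (cases a; cases "a - 1") auto
      have e1: "n * n ^ (a - 2) = n ^ (a - 1)" unfolding ab by simp
      have "n ^ l * (n ^ (a - 2)) ^ l = (n ^ (a - 1)) ^ l"
        by (simp only: power_mult_distrib[symmetric] e1)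
      then have "real (n ^ l * (n ^ (a - 2)) ^ l) = (real n ^ (a - 1)) ^ l"
        by (simp only: of_nat_power)
      then have "real (n ^ l * (n ^ (a - 2)) ^ l) * (real C * real m ^ l / real N ^ l)
          = real C * ((real n ^ (a - 1)) ^ l * real m ^ l / real N ^ l)" by simp
      also have "\<dots> = real C * (real n ^ (a - 1) * real m / real N) ^ l"
        by (simp only: power_mult_distrib power_divide)
      finally show ?thesis .
    qed
    finally show "real (\<Sum>p\<in>BT n a l. card {H \<in> F. snd p ` {..<l} \<subseteq> H})
      \<le> real C * (real n ^ (a - 1) * real m / real N) ^ l" .
  qed
  have "real (card {H \<in> F. card (berge_cycles_upto H k) > n}) * real n \<le> real S"
    using step1 by (metis of_nat_le_iff of_nat_mult)
  also have "\<dots> \<le> real (\<Sum>l\<in>{2..k}. \<Sum>p\<in>BT n a l. card {H \<in> F. snd p ` {..<l} \<subseteq> H})"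
    using step3 by (simp only: of_nat_le_iff)
  also have "\<dots> = (\<Sum>l\<in>{2..k}. real (\<Sum>p\<in>BT n a l. card {H \<in> F. snd p ` {..<l} \<subseteq> H}))"
    by (rule of_nat_sum)
  also have "\<dots> \<le> (\<Sum>l\<in>{2..k}. real C * (real n ^ (a - 1) * real m / real N) ^ l)"
    by (intro sum_mono step4)
  also have "\<dots> = real C * (\<Sum>l\<in>{2..k}. (real n ^ (a - 1) * real m / real N) ^ l)"
    by (simp add: sum_distrib_left)
  finally show ?thesis unfolding F_def C_def N_def .
qed


lemma term_bound:
  fixes n m l k :: nat
  assumes n1: "1 \<le> n" and lk: "l \<le> k" and k1: "1 \<le> k"
  shows "(real m / real n) ^ l / real n \<le> (real m / real n powr (1 + 1 / real k)) ^ l"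
proof -
  define r where "r = real m / real n powr (1 + 1 / real k)"
  have np: "0 < real n" using n1 by simp
  have "real n powr (1 + 1 / real k) = real n * real n powr (1 / real k)"
    using np by (simp add: powr_add)
  then have mr: "real m / real n = r * real n powr (1 / real k)"
    unfolding r_def using np by (simp add: field_simps)
  have r0: "0 \<le> r" unfolding r_def by simp
  have "(real n powr (1 / real k)) ^ l = real n powr (real l / real k)"
    using np by (simp add: powr_realpow[symmetric] powr_powr)
  also have "\<dots> \<le> real n powr 1"
    using n1 lk k1 by (intro powr_mono) (auto simp: divide_le_eq_1)
  also have "\<dots> = real n" using np by simp
  finally have pw: "(real n powr (1 / real k)) ^ l \<le> real n" .
  have "(real m / real n) ^ l / real n = r ^ l * ((real n powr (1 / real k)) ^ l / real n)"
    unfolding mr by (simp add: power_mult_distrib)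
  also have "\<dots> \<le> r ^ l * 1"
    using pw np r0 by (intro mult_left_mono) auto
  finally show ?thesis unfolding r_def by simp
qed

lemma ratio_bound:
  assumes a2: "2 \<le> a" and k2: "2 \<le> k" and an: "a \<le> n"
  shows "real (card {H \<in> hyp_family a n m. card (berge_cycles_upto H k) > n}) / real ((n choose a) choose m)
     \<le> (\<Sum>l\<in>{2..k}. (real a ^ a * (real m / real n powr (1 + 1 / real k))) ^ l)"
proof -
  define N where "N = n choose a"
  define x where "x = real n ^ (a - 1) * real m / real N"
  define c where "c = card {H \<in> hyp_family a n m. card (berge_cycles_upto H k) > n}"
  define G where "G = (\<Sum>l\<in>{2..k}. (real a ^ a * (real m / real n powr (1 + 1 / real k))) ^ l)"
  have np: "0 < real n" using an a2 by simp
  have G0: "0 \<le> G" unfolding G_def by (intro sum_nonneg) simp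
  have Nb: "(real n / real a) ^ a \<le> real N" unfolding N_def using binomial_ge_n_over_k_pow_k[OF an] by simp
  have Np: "0 < (real n / real a) ^ a" using np a2 by simp
  have x0: "0 \<le> x" unfolding x_def by simp
  have xb: "x \<le> real a ^ a * (real m / real n)"
  proof -
    have Npos: "0 < real N" using Nb Np by linarith
    have "x \<le> real n ^ (a - 1) * real m / (real n / real a) ^ a"
      unfolding x_def
      apply (rule divide_left_mono[OF Nb])
       apply simp
      apply (rule mult_pos_pos[OF Npos Np])
      done
    also have "\<dots> = real a ^ a * (real m / real n)"
    proof -
      obtain b where ab: "a = Suc b" using a2 by (cases a) auto
      have pw: "real n ^ a = real n * real n ^ (a - 1)" unfolding ab by simp
      have q: "0 < real n ^ (a - 1)" using np by simp
      have ap: "0 < real a ^ a" using a2 by simp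
      have "real n ^ (a - 1) * real m / (real n / real a) ^ a
          = real n ^ (a - 1) * real m * real a ^ a / (real n * real n ^ (a - 1))"
        using pw ap by (simp add: power_divide)
      also have "\<dots> = real a ^ a * (real m / real n)"
        using q np by (simp add: field_simps)
      finally show ?thesis .
    qed
    finally show ?thesis .
  qed
  have main: "real c * real n \<le> real (N choose m) * (\<Sum>l\<in>{2..k}. x ^ l)"
    using main_bound[OF a2 k2 an, of m] unfolding c_def x_def N_def .
  have sx: "(\<Sum>l\<in>{2..k}. x ^ l) / real n \<le> G"
  proof -
    have "(\<Sum>l\<in>{2..k}. x ^ l) / real n = (\<Sum>l\<in>{2..k}. x ^ l / real n)" by (simp add: sum_divide_distrib)
    also have "\<dots> \<le> G" unfolding G_def
    proof (intro sum_mono)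
      fix l assume l: "l \<in> {2..k}"
      have "x ^ l / real n \<le> (real a ^ a * (real m / real n)) ^ l / real n"
        using xb x0 np by (intro divide_right_mono power_mono) auto
      also have "\<dots> = (real a ^ a) ^ l * ((real m / real n) ^ l / real n)" by (simp only: power_mult_distrib mult.assoc divide_inverse)
      also have "\<dots> \<le> (real a ^ a) ^ l * ((real m / real n powr (1 + 1 / real k)) ^ l)"
        using l np k2 term_bound[of n l k m] by (intro mult_left_mono) auto
      also have "\<dots> = (real a ^ a * (real m / real n powr (1 + 1 / real k))) ^ l" by (simp only: power_mult_distrib)
      finally show "x ^ l / real n \<le> (real a ^ a * (real m / real n powr (1 + 1 / real k))) ^ l" .
    qed
    finally show ?thesis .
  qed
  show ?thesis
  proof (cases "N choose m = 0")
    case True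
    have z: "real ((n choose a) choose m) = 0" using True unfolding N_def by (simp only: of_nat_eq_0_iff)
    show ?thesis unfolding z division_ring_divide_zero using G0 unfolding G_def .
  next
    case False
    then have Cp: "0 < real (N choose m)" by simp
    have "real c \<le> real (N choose m) * (\<Sum>l\<in>{2..k}. x ^ l) / real n"
      using main np by (simp add: pos_le_divide_eq)
    then have "real c / real (N choose m) \<le> (\<Sum>l\<in>{2..k}. x ^ l) / real n"
      using Cp by (simp add: divide_le_eq field_simps)
    then show ?thesis using sx unfolding c_def N_def G_def by linarith
  qed
qed


theorem lemma14:
  fixes a k :: nat and m :: "nat \<Rightarrow> nat"
  assumes "a \<ge> 2" and "k \<ge> 2"
    and "(\<lambda>n. real (m n) / real n powr (1 + 1 / real k)) \<longlonglongrightarrow> 0"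
  shows "(\<lambda>n. real (card {H \<in> hyp_family a n (m n). card (berge_cycles_upto H k) > n})
              / real ((n choose a) choose (m n))) \<longlonglongrightarrow> 0"
proof (rule tendsto_sandwich[where f = "\<lambda>_. 0" and h = "\<lambda>n. \<Sum>l\<in>{2..k}. (real a ^ a * (real (m n) / real n powr (1 + 1 / real k))) ^ l"])
  show "\<forall>\<^sub>F n in sequentially. 0 \<le> real (card {H \<in> hyp_family a n (m n). card (berge_cycles_upto H k) > n})
              / real ((n choose a) choose (m n))" by simp
  show "\<forall>\<^sub>F n in sequentially. real (card {H \<in> hyp_family a n (m n). card (berge_cycles_upto H k) > n})
              / real ((n choose a) choose (m n)) \<le> (\<Sum>l\<in>{2..k}. (real a ^ a * (real (m n) / real n powr (1 + 1 / real k))) ^ l)"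
    using eventually_ge_at_top[of a] by eventually_elim (rule ratio_bound[OF assms(1,2)])
  show "(\<lambda>_. 0::real) \<longlonglongrightarrow> 0" by simp
  have "(\<lambda>n. \<Sum>l\<in>{2..k}. (real a ^ a * (real (m n) / real n powr (1 + 1 / real k))) ^ l)
      \<longlonglongrightarrow> (\<Sum>l\<in>{2..k}. (real a ^ a * 0) ^ l)"
    by (intro tendsto_sum tendsto_power tendsto_mult tendsto_const assms(3))
  also have "(\<Sum>l\<in>{2..k}. (real a ^ a * 0) ^ l) = (0::real)" by (intro sum.neutral) auto
  finally show "(\<lambda>n. \<Sum>l\<in>{2..k}. (real a ^ a * (real (m n) / real n powr (1 + 1 / real k))) ^ l) \<longlonglongrightarrow> 0" .
qed

end
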